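(* Every statistically compact metric space is compact.
   Context: For $A\subseteq\mathbb{N}$ let $d_n(A)=|A\cap\{1,\dots,n\}|/n$, $\overline{d}(A)=\limsup_n d_n(A)$, $\underline{d}(A)=\liminf_n d_n(A)$, and $d(A)$ their common value when equal. A sequence in $X$ is a map from an infinite subset $M\subseteq\mathbb{N}$ into $X$, written $(x_n)_{n\in M}$; a subsequence is $(x_n)_{n\in N}$ with $N\subseteq M$ infinite. It is nonthin if $\overline{d}(M)>0$. A nonthin sequence $(x_n)_{n\in M}$ is statistically convergent to $a\in X$ if for every open $U\ni a$, $d(\{n\in M:x_n\notin U\})=0$. A topological space $X$ is statistically compact if every nonthin sequence in $X$ has a nonthin subsequence that is statistically convergent to some point of $X$. *)

theory Defs
  imports "HOL-Analysis.Analysis"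
begin

definition dens_n :: "nat set \<Rightarrow> nat \<Rightarrow> real" where
  "dens_n A n = real (card (A \<inter> {1..n})) / real n"

definition upper_density :: "nat set \<Rightarrow> ereal" where
  "upper_density A = limsup (\<lambda>n. ereal (dens_n A n))"

definition density_zero :: "nat set \<Rightarrow> bool" where
  "density_zero A \<longleftrightarrow> (dens_n A \<longlonglongrightarrow> 0)"

definition nonthin :: "nat set \<Rightarrow> bool" where
  "nonthin M \<longleftrightarrow> upper_density M > 0"

text \<open>A nonthin sequence (x_n)_{n\<in>M} statistically converges to a (in the
  ambient topology; for a subspace S with a \<in> S, neighbourhoods in S are traces
  of open sets, so this coincides with the subspace notion).\<close>
definition stat_converges :: "nat set \<Rightarrow> (nat \<Rightarrow> 'a::topological_space) \<Rightarrow> 'a \<Rightarrow> bool" where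
  "stat_converges M x a \<longleftrightarrow>
     nonthin M \<and> (\<forall>U. open U \<and> a \<in> U \<longrightarrow> density_zero {n \<in> M. x n \<notin> U})"

definition stat_compact :: "'a::topological_space set \<Rightarrow> bool" where
  "stat_compact S \<longleftrightarrow>
    (\<forall>M x. infinite M \<and> nonthin M \<and> x ` M \<subseteq> S \<longrightarrow>
       (\<exists>N a. N \<subseteq> M \<and> infinite N \<and> nonthin N \<and> a \<in> S \<and> stat_converges N x a))"

end

theory Submission
  imports Defs
begin

lemma dens_n_nonneg: "dens_n A n \<ge> 0"
  by (simp add: dens_n_def)

lemma nonthin_UNIV: "nonthin UNIV"
proof -
  have ev: "eventually (\<lambda>n. ereal (dens_n UNIV n) = 1) sequentially"
    using eventually_ge_at_top[of "1::nat"]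
  proof eventually_elim
    case (elim n) then show ?case by (simp add: dens_n_def)
  qed
  have "(\<lambda>n. ereal (dens_n UNIV n)) \<longlonglongrightarrow> 1"
    by (rule tendsto_eventually) (use ev in simp)
  hence "upper_density UNIV = 1"
    unfolding upper_density_def by (rule lim_imp_Limsup[OF trivial_limit_sequentially])
  thus ?thesis by (simp add: nonthin_def)
qed

lemma not_nonthin:
  assumes N: "N \<subseteq> A \<union> B" and A: "finite A" and B: "density_zero B"
  shows "\<not> nonthin N"
proof -
  have B0: "dens_n B \<longlonglongrightarrow> 0" using B by (simp add: density_zero_def)
  have le: "dens_n N n \<le> real (card A) / real n + dens_n B n" for n
  proof -
    have "card (N \<inter> {1..n}) \<le> card ((A) \<union> (B \<inter> {1..n}))"
      by (rule card_mono) (use A N in auto)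
    also have "\<dots> \<le> card A + card (B \<inter> {1..n})" by (rule card_Un_le)
    finally have "real (card (N \<inter> {1..n})) \<le> real (card A) + real (card (B \<inter> {1..n}))"
      by linarith
    hence "real (card (N \<inter> {1..n})) / real n \<le> (real (card A) + real (card (B \<inter> {1..n}))) / real n"
      by (rule divide_right_mono) simp
    thus ?thesis unfolding dens_n_def by (simp only: add_divide_distrib)
  qed
  have "(\<lambda>n. real (card A) / real n + dens_n B n) \<longlonglongrightarrow> 0 + 0"
    by (rule tendsto_add[OF lim_const_over_n B0])
  hence up: "(\<lambda>n. real (card A) / real n + dens_n B n) \<longlonglongrightarrow> 0" by simp
  have "dens_n N \<longlonglongrightarrow> 0"
    by (rule tendsto_sandwich[of "\<lambda>_. 0" "dens_n N" _ "\<lambda>n. real (card A) / real n + dens_n B n", OF _ _ tendsto_const up])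
       (simp_all add: dens_n_nonneg le)
  hence "(\<lambda>n. ereal (dens_n N n)) \<longlonglongrightarrow> ereal 0"
    by (rule tendsto_ereal)
  hence "upper_density N = 0"
    unfolding upper_density_def zero_ereal_def by (rule lim_imp_Limsup[OF trivial_limit_sequentially])
  thus ?thesis by (simp add: nonthin_def)
qed

theorem mainTheorem7:
  fixes S :: "'a::metric_space set"
  assumes "stat_compact S"
  shows "compact S"
proof (unfold compact_eq_Bolzano_Weierstrass, intro allI impI)
  fix T assume T: "infinite T \<and> T \<subseteq> S"
  then obtain f :: "nat \<Rightarrow> 'a" where f: "inj f" "range f \<subseteq> T"
    using infinite_countable_subset[of T] by auto
  have "infinite (UNIV :: nat set)" by simp
  then obtain N a where Na: "N \<subseteq> UNIV" "infinite N" "nonthin N" "a \<in> S" "stat_converges N f a"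
  proof -
    have "\<forall>M x. infinite M \<and> nonthin M \<and> x ` M \<subseteq> S \<longrightarrow>
       (\<exists>N a. N \<subseteq> M \<and> infinite N \<and> nonthin N \<and> a \<in> S \<and> stat_converges N x a)"
      using assms unfolding stat_compact_def by simp
    hence "infinite (UNIV::nat set) \<and> nonthin UNIV \<and> f ` UNIV \<subseteq> S \<longrightarrow>
       (\<exists>N a. N \<subseteq> UNIV \<and> infinite N \<and> nonthin N \<and> a \<in> S \<and> stat_converges N f a)"
      by (rule spec[of _ f, OF spec[of _ UNIV]])
    moreover have "f ` UNIV \<subseteq> S" using f T by blast
    ultimately have "\<exists>N a. N \<subseteq> UNIV \<and> infinite N \<and> nonthin N \<and> a \<in> S \<and> stat_converges N f a"
      using nonthin_UNIV by simp
    thus ?thesis using that by blast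
  qed
  have "a islimpt T"
    unfolding islimpt_approachable
  proof (intro allI impI)
    fix e :: real assume e: "e > 0"
    let ?A = "{n \<in> N. f n \<in> ball a e}"
    let ?B = "{n \<in> N. f n \<notin> ball a e}"
    have B: "density_zero ?B"
    proof -
      have "\<forall>U. open U \<and> a \<in> U \<longrightarrow> density_zero {n \<in> N. f n \<notin> U}"
        using Na(5) unfolding stat_converges_def by blast
      hence "open (ball a e) \<and> a \<in> ball a e \<longrightarrow> density_zero ?B" by (rule spec)
      thus ?thesis using e by simp
    qed
    have "infinite ?A"
      using not_nonthin[of N ?A ?B] B Na(3) by blast
    hence "infinite (f ` ?A)" using f(1) finite_imageD[of f ?A] inj_on_subset[of f UNIV ?A] by auto
    hence "infinite (f ` ?A - {a})" by simp
    then obtain y where "y \<in> f ` ?A - {a}" by (metis finite.emptyI ex_in_conv)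
    then obtain m where m: "m \<in> N" "dist a (f m) < e" "f m \<noteq> a" by auto
    have "f m \<in> T" using f(2) by blast
    thus "\<exists>x'\<in>T. x' \<noteq> a \<and> dist x' a < e" using m by (metis dist_commute)
  qed
  thus "\<exists>x\<in>S. x islimpt T" using Na(4) by blast
qed

end
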